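(* The class of coherent spaces is not $\omega$-projective: there is a projective system of coherent topological spaces, indexed by a directed preordered set with a countable cofinal subset, whose projective limit in the category of topological spaces is not coherent.
   Context: A projective system of topological spaces consists of a directed preordered set $(I,\sqsubseteq)$, spaces $X_i$ and continuous maps $p_{ij}\colon X_j\to X_i$ for $i\sqsubseteq j$ with $p_{ii}=\mathrm{id}$ and $p_{ij}\circ p_{jk}=p_{ik}$; its projective limit is its limit in the category of topological spaces. A space is coherent if the intersection of any two compact saturated subsets is compact (saturated = upward closed in the specialization preorder $x\le y$ iff every open neighbourhood of $x$ contains $y$; compactness assumes no separation axiom). *)

theory Defs
  imports "HOL-Analysis.Analysis"
begin

definition spec_le :: "'a topology \<Rightarrow> 'a \<Rightarrow> 'a \<Rightarrow> bool" where
  "spec_le X x y \<longleftrightarrow> x \<in> topspace X \<and> y \<in> topspace X \<and>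
     (\<forall>U. openin X U \<and> x \<in> U \<longrightarrow> y \<in> U)"

definition saturated_in :: "'a topology \<Rightarrow> 'a set \<Rightarrow> bool" where
  "saturated_in X K \<longleftrightarrow> K \<subseteq> topspace X \<and> (\<forall>x y. x \<in> K \<and> spec_le X x y \<longrightarrow> y \<in> K)"

text \<open>Coherent: the intersection of two compact saturated subsets is compact
  (compactin assumes no separation axiom).\<close>
definition coherent_space :: "'a topology \<Rightarrow> bool" where
  "coherent_space X \<longleftrightarrow> (\<forall>K L. compactin X K \<and> saturated_in X K \<and>
       compactin X L \<and> saturated_in X L \<longrightarrow> compactin X (K \<inter> L))"

definition directed_preorder :: "'i set \<Rightarrow> ('i \<Rightarrow> 'i \<Rightarrow> bool) \<Rightarrow> bool" where
  "directed_preorder I le \<longleftrightarrow> I \<noteq> {} \<and>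
     (\<forall>i\<in>I. le i i) \<and>
     (\<forall>i\<in>I. \<forall>j\<in>I. \<forall>k\<in>I. le i j \<and> le j k \<longrightarrow> le i k) \<and>
     (\<forall>i\<in>I. \<forall>j\<in>I. \<exists>k\<in>I. le i k \<and> le j k)"

definition projective_system ::
  "'i set \<Rightarrow> ('i \<Rightarrow> 'i \<Rightarrow> bool) \<Rightarrow> ('i \<Rightarrow> 'a topology) \<Rightarrow> ('i \<Rightarrow> 'i \<Rightarrow> 'a \<Rightarrow> 'a) \<Rightarrow> bool" where
  "projective_system I le X p \<longleftrightarrow>
     (\<forall>i\<in>I. \<forall>j\<in>I. le i j \<longrightarrow> continuous_map (X j) (X i) (p i j)) \<and>
     (\<forall>i\<in>I. \<forall>x\<in>topspace (X i). p i i x = x) \<and>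
     (\<forall>i\<in>I. \<forall>j\<in>I. \<forall>k\<in>I. le i j \<and> le j k \<longrightarrow>
        (\<forall>x\<in>topspace (X k). p i j (p j k x) = p i k x))"

definition projective_limit ::
  "'i set \<Rightarrow> ('i \<Rightarrow> 'i \<Rightarrow> bool) \<Rightarrow> ('i \<Rightarrow> 'a topology) \<Rightarrow> ('i \<Rightarrow> 'i \<Rightarrow> 'a \<Rightarrow> 'a) \<Rightarrow> ('i \<Rightarrow> 'a) topology" where
  "projective_limit I le X p =
     subtopology (product_topology X I)
       {f \<in> topspace (product_topology X I). \<forall>i\<in>I. \<forall>j\<in>I. le i j \<longrightarrow> p i j (f j) = f i}"

definition has_countable_cofinal :: "'i set \<Rightarrow> ('i \<Rightarrow> 'i \<Rightarrow> bool) \<Rightarrow> bool" where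
  "has_countable_cofinal I le \<longleftrightarrow> (\<exists>C\<subseteq>I. countable C \<and> (\<forall>i\<in>I. \<exists>c\<in>C. le i c))"

end

theory Submission
  imports Defs "HOL-Library.Countable_Set"
begin

definition MM :: "nat set set" where "MM = {x. finite x}"
definition SS :: "nat set set" where "SS = MM \<union> {UNIV, -{0}}"
definition RR :: "nat set \<Rightarrow> nat set set" where "RR A = MM - Pow A"
definition opT :: "nat set \<Rightarrow> nat set set \<Rightarrow> bool" where
  "opT A U \<longleftrightarrow> U \<subseteq> SS \<and> ((U \<inter> RR A \<noteq> {} \<or> UNIV \<in> U \<or> -{0} \<in> U) \<longrightarrow> RR A \<subseteq> U)"
definition opZ :: "nat set set \<Rightarrow> bool" where
  "opZ U \<longleftrightarrow> U \<subseteq> SS \<and> ((UNIV \<in> U \<or> -{0} \<in> U) \<longrightarrow> finite (MM - U))"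
definition XT where "XT A = topology (opT A)"
definition ZT where "ZT = topology opZ"

lemma infm: "infinite (-{0::nat})"
proof
  assume "finite (-{0::nat})"
  hence "finite (insert 0 (-{0::nat}))" by simp
  moreover have "insert 0 (-{0::nat}) = UNIV" by auto
  ultimately show False by simp
qed
lemma ab: "UNIV \<notin> MM" "-{0::nat} \<notin> MM" "UNIV \<noteq> -{0::nat}"
  using infm by (auto simp: MM_def)

lemma istop_T: "istopology (opT A)"
  unfolding istopology_def
proof (intro conjI allI impI)
  fix S T assume "opT A S" "opT A T" thus "opT A (S \<inter> T)"
    unfolding opT_def by blast
next
  fix K assume K: "\<forall>k\<in>K. opT A k"
  show "opT A (\<Union>K)" unfolding opT_def
  proof (intro conjI impI)
    show "\<Union>K \<subseteq> SS" using K opT_def by blast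
    assume "\<Union>K \<inter> RR A \<noteq> {} \<or> UNIV \<in> \<Union>K \<or> -{0} \<in> \<Union>K"
    then obtain k where "k \<in> K" "k \<inter> RR A \<noteq> {} \<or> UNIV \<in> k \<or> -{0} \<in> k" by blast
    hence "RR A \<subseteq> k" using K opT_def by blast
    thus "RR A \<subseteq> \<Union>K" using \<open>k \<in> K\<close> by blast
  qed
qed

lemma istop_Z: "istopology opZ"
  unfolding istopology_def
proof (intro conjI allI impI)
  fix S T assume "opZ S" "opZ T" thus "opZ (S \<inter> T)"
    unfolding opZ_def by (auto simp: Diff_Int)
next
  fix K assume K: "\<forall>k\<in>K. opZ k"
  show "opZ (\<Union>K)" unfolding opZ_def
  proof (intro conjI impI)
    show "\<Union>K \<subseteq> SS" using K opZ_def by blast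
    assume "UNIV \<in> \<Union>K \<or> -{0} \<in> \<Union>K"
    then obtain k where "k \<in> K" "UNIV \<in> k \<or> -{0} \<in> k" by blast
    hence "finite (MM - k)" using K opZ_def by blast
    thus "finite (MM - \<Union>K)" by (rule finite_subset[rotated]) (use \<open>k \<in> K\<close> in blast)
  qed
qed

lemma openin_XT: "openin (XT A) = opT A" by (simp add: XT_def istop_T)
lemma openin_ZT: "openin ZT = opZ" by (simp add: ZT_def istop_Z)

lemma topspace_XT: "topspace (XT A) = SS"
proof -
  have "opT A SS" unfolding opT_def RR_def SS_def by blast
  thus ?thesis unfolding topspace_def openin_XT opT_def by blast
qed

lemma topspace_ZT: "topspace ZT = SS"
proof -
  have "opZ SS" unfolding opZ_def SS_def by auto
  thus ?thesis unfolding topspace_def openin_ZT opZ_def by blast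
qed

lemma finite_opens: assumes "finite A" shows "finite {U. opT A U}"
proof -
  let ?F = "Pow A \<union> {UNIV, -{0}}"
  have "{U. opT A U} \<subseteq> (\<lambda>(P,Q). P \<union> Q) ` (Pow ?F \<times> {{}, RR A})"
  proof
    fix U assume "U \<in> {U. opT A U}"
    hence U: "opT A U" by simp
    have "Pow A \<subseteq> MM" using assms by (auto simp: MM_def intro: rev_finite_subset)
    hence SS: "SS = ?F \<union> RR A" unfolding SS_def RR_def by blast
    have "U = (U \<inter> ?F) \<union> (U \<inter> RR A)"
      using U SS unfolding opT_def by blast
    moreover have "U \<inter> RR A \<in> {{}, RR A}"
    proof (cases "U \<inter> RR A = {}")
      case False
      hence "RR A \<subseteq> U" using U unfolding opT_def by simp
      hence "U \<inter> RR A = RR A" by blast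
      thus ?thesis by simp
    qed simp
    moreover have "(U \<inter> ?F, U \<inter> RR A) \<in> Pow ?F \<times> {{}, RR A}"
      using \<open>U \<inter> RR A \<in> {{}, RR A}\<close> by blast
    ultimately show "U \<in> (\<lambda>(P,Q). P \<union> Q) ` (Pow ?F \<times> {{}, RR A})"
      by (intro image_eqI[of _ _ "(U \<inter> ?F, U \<inter> RR A)"]) simp_all
  qed
  moreover have "finite ?F" using assms by simp
  hence "finite (Pow ?F)" by (simp only: finite_Pow_iff)
  hence "finite (Pow ?F \<times> {{}, RR A})" by (intro finite_cartesian_product) simp_all
  hence "finite ((\<lambda>(P,Q). P \<union> Q) ` (Pow ?F \<times> {{}, RR A}))" by (rule finite_imageI)
  ultimately show ?thesis by (rule finite_subset)
qed

lemma compact_XT: assumes "finite A" "K \<subseteq> SS" shows "compactin (XT A) K"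
  unfolding compactin_def topspace_XT openin_XT
proof (intro conjI allI impI)
  show "K \<subseteq> SS" by fact
  fix U assume "(\<forall>u\<in>U. opT A u) \<and> K \<subseteq> \<Union> U"
  moreover hence "finite U" using finite_opens[OF assms(1)] by (metis finite_subset mem_Collect_eq subsetI)
  ultimately show "\<exists>F. finite F \<and> F \<subseteq> U \<and> K \<subseteq> \<Union> F" by blast
qed

lemma coherent_XT: assumes "finite A" shows "coherent_space (XT A)"
  unfolding coherent_space_def
proof (intro allI impI)
  fix K L assume "compactin (XT A) K \<and> saturated_in (XT A) K \<and> compactin (XT A) L \<and> saturated_in (XT A) L"
  hence "K \<subseteq> SS" using compactin_subset_topspace topspace_XT by metis
  hence "K \<inter> L \<subseteq> SS" by blast
  thus "compactin (XT A) (K \<inter> L)" using compact_XT[OF assms] by blast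
qed

definition II :: "nat set set" where "II = {A. finite A}"
definition Lim where "Lim = projective_limit II (\<subseteq>) XT (\<lambda>i j x. x)"
definition cc :: "nat set \<Rightarrow> nat set \<Rightarrow> nat set" where "cc y = (\<lambda>i\<in>II. y)"

lemma empty_II: "{} \<in> II" by (simp add: II_def)

lemma topspace_Lim: "topspace Lim = {f \<in> (\<Pi>\<^sub>E i\<in>II. SS). \<forall>i\<in>II. \<forall>j\<in>II. i \<subseteq> j \<longrightarrow> f j = f i}"
  unfolding Lim_def projective_limit_def by (auto simp: topspace_XT)

lemma T1: "y \<in> SS \<Longrightarrow> cc y \<in> topspace Lim"
  unfolding topspace_Lim cc_def by auto

lemma cc_app: "i \<in> II \<Longrightarrow> cc y i = y" by (simp add: cc_def)

lemma T2: assumes "f \<in> topspace Lim" shows "f = cc (f {})" "f {} \<in> SS"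
proof -
  have f: "f \<in> (\<Pi>\<^sub>E i\<in>II. SS)" "\<forall>i\<in>II. \<forall>j\<in>II. i \<subseteq> j \<longrightarrow> f j = f i"
    using assms unfolding topspace_Lim by blast+
  show "f {} \<in> SS" using f(1) empty_II by (rule PiE_mem)
  show "f = cc (f {})"
  proof (rule ext)
    fix i show "f i = cc (f {}) i"
    proof (cases "i \<in> II")
      case True
      have "{} \<subseteq> i" by simp
      hence "f i = f {}" using f(2) empty_II True by metis
      moreover have "cc (f {}) i = f {}" using True by (rule cc_app)
      ultimately show ?thesis by simp
    next
      case False
      hence "f i = undefined" using f(1) by (rule PiE_arb[rotated])
      moreover have "cc (f {}) i = undefined" using False by (simp add: cc_def)
      ultimately show ?thesis by simp
    qed
  qed
qed

lemma P: "i \<in> II \<Longrightarrow> continuous_map Lim (XT i) (\<lambda>f. f i)"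
  unfolding Lim_def projective_limit_def
  by (rule continuous_map_from_subtopology, rule continuous_map_product_projection)

lemma opT_mono: assumes "i \<subseteq> j" "opT i U" shows "opT j U"
proof -
  have "RR j \<subseteq> RR i" using assms(1) unfolding RR_def by blast
  thus ?thesis using assms(2) unfolding opT_def by blast
qed

lemma cont_id: assumes "i \<subseteq> j" shows "continuous_map (XT j) (XT i) (\<lambda>x. x)"
  unfolding continuous_map_def topspace_XT openin_XT
proof (intro conjI allI impI)
  show "(\<lambda>x. x) \<in> SS \<rightarrow> SS" by simp
  fix U assume "opT i U"
  moreover hence "{x \<in> SS. x \<in> U} = U" unfolding opT_def by blast
  ultimately show "opT j {x \<in> SS. x \<in> U}" using opT_mono[OF assms] by simp
qed

lemma C: "continuous_map ZT Lim cc"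
  unfolding Lim_def projective_limit_def
proof (rule continuous_map_into_subtopology)
  show "continuous_map ZT (product_topology XT II) cc"
    unfolding continuous_map_componentwise
  proof (intro conjI ballI)
    show "cc ` topspace ZT \<subseteq> extensional II" by (auto simp: cc_def)
    fix k assume k: "k \<in> II"
    have "continuous_map ZT (XT k) (\<lambda>x. x)"
      unfolding continuous_map_def topspace_XT openin_XT topspace_ZT openin_ZT
    proof (intro conjI allI impI)
      show "(\<lambda>x. x) \<in> SS \<rightarrow> SS" by simp
      fix U assume U: "opT k U"
      hence eq: "{x \<in> SS. x \<in> U} = U" unfolding opT_def by blast
      have "opZ U" unfolding opZ_def
      proof (intro conjI impI)
        show "U \<subseteq> SS" using U opT_def by blast
        assume "UNIV \<in> U \<or> - {0} \<in> U"
        hence "RR k \<subseteq> U" using U opT_def by blast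
        hence "MM - U \<subseteq> Pow k" unfolding RR_def by blast
        moreover have "finite (Pow k)" using k unfolding II_def by simp
        ultimately show "finite (MM - U)" by (rule finite_subset)
      qed
      thus "opZ {x \<in> SS. x \<in> U}" using eq by simp
    qed
    thus "continuous_map ZT (XT k) (\<lambda>x. cc x k)" using k by (simp add: cc_app)
  qed
  show "cc \<in> topspace ZT \<rightarrow> {f \<in> topspace (product_topology XT II). \<forall>i\<in>II. \<forall>j\<in>II. i \<subseteq> j \<longrightarrow> f j = f i}"
  proof (rule Pi_I)
    fix y assume "y \<in> topspace ZT"
    hence "cc y \<in> topspace Lim" using T1 topspace_ZT by simp
    thus "cc y \<in> {f \<in> topspace (product_topology XT II). \<forall>i\<in>II. \<forall>j\<in>II. i \<subseteq> j \<longrightarrow> f j = f i}"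
      unfolding topspace_Lim topspace_product_topology topspace_XT .
  qed
qed

lemma Kc: assumes "z \<in> {UNIV, -{0}}" shows "compactin ZT (insert z MM)"
  unfolding compactin_def topspace_ZT openin_ZT
proof (intro conjI allI impI)
  show "insert z MM \<subseteq> SS" using assms by (auto simp: SS_def)
  fix U assume U: "(\<forall>u\<in>U. opZ u) \<and> insert z MM \<subseteq> \<Union>U"
  then obtain u0 where u0: "u0 \<in> U" "z \<in> u0" by blast
  hence fin: "finite (MM - u0)" using U assms unfolding opZ_def by blast
  have "\<forall>x\<in>MM - u0. \<exists>u\<in>U. x \<in> u" using U by blast
  then obtain g where g: "\<forall>x\<in>MM - u0. g x \<in> U \<and> x \<in> g x" by metis
  show "\<exists>F. finite F \<and> F \<subseteq> U \<and> insert z MM \<subseteq> \<Union>F"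
    by (rule exI[of _ "insert u0 (g ` (MM - u0))"]) (use fin g u0 in auto)
qed

lemma ccinj: "cc x = cc y \<Longrightarrow> x = y"
  by (metis cc_app empty_II)

lemma Sat: assumes "z \<in> {UNIV, -{0}}" shows "saturated_in Lim (cc ` insert z MM)"
  unfolding saturated_in_def
proof (intro conjI allI impI)
  have "insert z MM \<subseteq> SS" using assms by (auto simp: SS_def)
  thus "cc ` insert z MM \<subseteq> topspace Lim" using T1 by blast
  fix x y assume xy: "x \<in> cc ` insert z MM \<and> spec_le Lim x y"
  then obtain x0 where x0: "x0 \<in> insert z MM" "x = cc x0" by blast
  have y: "y \<in> topspace Lim" "\<forall>U. openin Lim U \<and> x \<in> U \<longrightarrow> y \<in> U" using xy spec_le_def by metis+
  define y0 where "y0 = y {}"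
  have yy: "y = cc y0" "y0 \<in> SS" using T2[OF y(1)] y0_def by auto
  show "y \<in> cc ` insert z MM"
  proof (rule ccontr)
    assume "y \<notin> cc ` insert z MM"
    hence y0n: "y0 \<notin> insert z MM" using yy by blast
    define z' where "z' = y0"
    have z': "z' \<in> {UNIV, -{0}}" "z' \<noteq> z" "z' \<notin> MM" using y0n yy(2) unfolding z'_def SS_def by auto
    have op: "opT {} (SS - {z'})" unfolding opT_def RR_def using z' by (auto simp: SS_def)
    let ?V = "{f \<in> topspace Lim. f {} \<in> SS - {z'}}"
    have "openin Lim ?V"
      by (rule openin_continuous_map_preimage[OF P[OF empty_II]]) (simp add: openin_XT op)
    moreover have "x \<in> ?V"
    proof -
      have "x0 \<in> SS" using x0(1) \<open>insert z MM \<subseteq> SS\<close> by blast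
      moreover have "x0 \<noteq> z'" using x0(1) z' by blast
      ultimately show ?thesis using T1[of x0] x0(2) cc_app[OF empty_II, of x0] by simp
    qed
    ultimately have "y \<in> ?V" using y by blast
    hence "y {} \<noteq> z'" by simp
    thus False using yy z'_def cc_app[OF empty_II] by simp
  qed
qed

lemma infMM: "infinite MM"
proof
  assume "finite MM"
  moreover have "range (\<lambda>n::nat. {n}) \<subseteq> MM" by (auto simp: MM_def)
  ultimately have "finite (range (\<lambda>n::nat. {n}))" by (rule finite_subset[rotated])
  moreover have "inj (\<lambda>n::nat. {n})" by (auto simp: inj_def)
  ultimately have "finite (UNIV :: nat set)" using finite_imageD by blast
  thus False by simp
qed

lemma NC: "\<not> compactin Lim (cc ` MM)"
proof
  assume cpt: "compactin Lim (cc ` MM)"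
  define W where "W x = {f \<in> topspace Lim. f x \<in> {x}}" for x
  have opW: "openin Lim (W x)" if "x \<in> MM" for x
  proof -
    have xI: "x \<in> II" using that by (simp add: MM_def II_def)
    have "opT x {x}" unfolding opT_def RR_def SS_def using that ab by auto
    thus ?thesis unfolding W_def
      by (intro openin_continuous_map_preimage[OF P[OF xI]]) (simp add: openin_XT)
  qed
  have cov: "cc ` MM \<subseteq> \<Union>(W ` MM)"
  proof
    fix f assume "f \<in> cc ` MM"
    then obtain y where y: "y \<in> MM" "f = cc y" by blast
    have "y \<in> II" using y by (simp add: MM_def II_def)
    hence "f \<in> W y" using y T1[of y] unfolding W_def by (auto simp: SS_def cc_app)
    thus "f \<in> \<Union>(W ` MM)" using y by blast
  qed
  obtain F where F: "finite F" "F \<subseteq> W ` MM" "cc ` MM \<subseteq> \<Union>F"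
    using cpt cov opW unfolding compactin_def by (metis (no_types, lifting) imageE)
  obtain G where G: "G \<subseteq> MM" "finite G" "F = W ` G" using finite_subset_image[OF F(1,2)] by blast
  have "MM \<subseteq> G"
  proof
    fix y assume y: "y \<in> MM"
    then obtain g where g: "g \<in> G" "cc y \<in> W g" using F(3) G(3) by blast
    have "g \<in> II" using g G(1) by (auto simp: MM_def II_def)
    thus "y \<in> G" using g unfolding W_def by (simp add: cc_app)
  qed
  thus False using G(2) infMM finite_subset by blast
qed

theorem corollary4p6:
  shows "\<exists>(I :: nat set set) (le :: nat set \<Rightarrow> nat set \<Rightarrow> bool)
            (X :: nat set \<Rightarrow> nat set topology) (p :: nat set \<Rightarrow> nat set \<Rightarrow> nat set \<Rightarrow> nat set).
           directed_preorder I le \<and> has_countable_cofinal I le \<and>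
           projective_system I le X p \<and>
           (\<forall>i\<in>I. coherent_space (X i)) \<and>
           \<not> coherent_space (projective_limit I le X p)"
proof (intro exI conjI)
  show "directed_preorder II (\<subseteq>)"
    unfolding directed_preorder_def
  proof (intro conjI ballI)
    show "II \<noteq> {}" using empty_II by blast
    fix i j assume "i \<in> II" "j \<in> II"
    thus "\<exists>k\<in>II. i \<subseteq> k \<and> j \<subseteq> k" by (intro bexI[of _ "i \<union> j"]) (auto simp: II_def)
  qed auto
  show "has_countable_cofinal II (\<subseteq>)"
    unfolding has_countable_cofinal_def II_def by (auto intro!: exI[of _ "{A. finite A}"] countable_Collect_finite)
  show "projective_system II (\<subseteq>) XT (\<lambda>i j x. x)"
    unfolding projective_system_def using cont_id by blast
  show "\<forall>i\<in>II. coherent_space (XT i)" using coherent_XT by (simp add: II_def)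
  show "\<not> coherent_space (projective_limit II (\<subseteq>) XT (\<lambda>i j x. x))"
    unfolding Lim_def[symmetric] coherent_space_def
  proof
    assume H: "\<forall>K L. compactin Lim K \<and> saturated_in Lim K \<and> compactin Lim L \<and> saturated_in Lim L \<longrightarrow> compactin Lim (K \<inter> L)"
    have "compactin Lim (cc ` insert UNIV MM \<inter> cc ` insert (-{0}) MM)"
      using H Sat image_compactin[OF Kc C] by blast
    moreover have "cc ` insert UNIV MM \<inter> cc ` insert (-{0}) MM = cc ` MM"
      using ccinj ab by blast
    ultimately show False using NC by simp
  qed
qed

end
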